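(* Fix $\varepsilon>0$, $\beta\in(0,1)$, an even integer $d>4(e^{2\varepsilon}-1)^2\ln\frac2\beta$, and $\varepsilon$-private randomizers $R_1,\dots,R_n:[d]\to\mathcal Y$. Let $v=(e^{2\varepsilon}-1)\sqrt{\frac4d\ln\frac2\beta}$. If $H$ is chosen uniformly among subsets of $[d]$ of size $d/2$, then with probability at least $5/6$ over $H$, both of the following hold: \[ \forall i\in[n]:\ \Pr\left[R_i(\mathbf U)\in\mathit{Leak}(v,H,R_i)\right]<6\beta n,\qquad \forall i\in[n]:\ \Pr\left[R_i(\mathbf U_H)\in\mathit{Leak}(v,H,R_i)\right]<6e^{\varepsilon}\beta n . \]
   Context: $\mathcal Y$ is a countable message set. A randomizer $R:[d]\to\mathcal Y$ is $\varepsilon$-private if for all $x,x'\in[d]$ and all $Y\subseteq\mathcal Y$, $\Pr[R(x)\in Y]\le e^{\varepsilon}\Pr[R(x')\in Y]$. $\mathbf U$ is the uniform distribution on $[d]$; for $H\subseteq[d]$, $\mathbf U_H$ is the uniform distribution on $H$; $R(\mathbf U)$, $R(\mathbf U_H)$ are the distributions of $R(\hat x)$ for $\hat x\sim\mathbf U$, resp. $\hat x\sim\mathbf U_H$. For $H\subset[d]$ with $|H|=d/2$, a message $y$ is $v$-leaky with respect to $H,R$ if $\left|\ln\frac{\Pr[R(\mathbf U_H)=y]}{\Pr[R(\mathbf U)=y]}\right|>v$ (messages with $\Pr[R(\mathbf U)=y]=0$ are regarded as not leaky), and $\mathit{Leak}(v,H,R)$ is the set of $y\in\mathcal Y$ that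 are $v$-leaky with respect to $H,R$. *)

theory Defs
  imports "HOL-Probability.Probability"
begin

definition private_randomizer :: "real \<Rightarrow> nat \<Rightarrow> (nat \<Rightarrow> 'y::countable pmf) \<Rightarrow> bool" where
  "private_randomizer eps d R \<longleftrightarrow>
     (\<forall>x\<in>{1..d}. \<forall>x'\<in>{1..d}. \<forall>Y.
        measure_pmf.prob (R x) Y \<le> exp eps * measure_pmf.prob (R x') Y)"

text \<open>R(U) and R(U_H): output distribution on a uniformly random input.\<close>
definition rand_out :: "nat set \<Rightarrow> (nat \<Rightarrow> 'y pmf) \<Rightarrow> 'y pmf" where
  "rand_out S R = bind_pmf (pmf_of_set S) R"

text \<open>v-leaky messages. Since ln 0 is the junk value 0 in Isabelle, the case
  Pr[R(U_H)=y] = 0 < Pr[R(U)=y] (log ratio = -infinity) is treated as leaky explicitly.\<close>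
definition Leak :: "real \<Rightarrow> nat \<Rightarrow> nat set \<Rightarrow> (nat \<Rightarrow> 'y pmf) \<Rightarrow> 'y set" where
  "Leak v d H R = {y. pmf (rand_out {1..d} R) y \<noteq> 0 \<and>
      (pmf (rand_out H R) y = 0 \<or>
       \<bar>ln (pmf (rand_out H R) y / pmf (rand_out {1..d} R) y)\<bar> > v)}"

end

theory Submission
  imports Defs
begin

definition Hsel :: "nat \<Rightarrow> nat list \<Rightarrow> (nat \<Rightarrow> bool) \<Rightarrow> nat set" where
  "Hsel k xs c = (\<lambda>j. xs ! (2*j + (if c j then 1 else 0))) ` {..<k}"

lemma idx_inj: "inj_on (\<lambda>j::nat. 2*j + (if c j then 1 else 0)) {..<k}"
  by (auto simp: inj_on_def split: if_splits)

lemma Hsel_props: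
  assumes "xs \<in> permutations_of_set A" "card A = 2*k" "finite A"
  shows "Hsel k xs c \<subseteq> A" "card (Hsel k xs c) = k"
proof -
  have d: "distinct xs" and s: "set xs = A" using assms(1) by (auto simp: permutations_of_set_def)
  have len: "length xs = 2*k" using d s assms(2) distinct_card by fastforce
  have ib: "2*j + (if c j then 1 else 0) < 2*k" if "j < k" for j using that by auto
  show "Hsel k xs c \<subseteq> A" unfolding Hsel_def using ib len s by auto
  have "inj_on (\<lambda>j. xs ! (2*j + (if c j then 1 else 0))) {..<k}"
  proof (rule inj_onI)
    fix i j assume i: "i \<in> {..<k}" and j: "j \<in> {..<k}" and eq: "xs ! (2*i + (if c i then 1 else 0)) = xs ! (2*j + (if c j then 1 else 0))"
    have "2*i + (if c i then 1 else 0) = 2*j + (if c j then 1 else 0)"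
      using nth_eq_iff_index_eq[OF d, of "2*i + (if c i then 1 else 0)" "2*j + (if c j then 1 else 0)"] eq ib[of i] ib[of j] i j len by auto
    then show "i = j" by (auto split: if_splits)
  qed
  then show "card (Hsel k xs c) = k" unfolding Hsel_def by (simp add: card_image)
qed

lemma Hsel_map:
  assumes "length xs = 2*k"
  shows "Hsel k (map \<tau> xs) c = \<tau> ` Hsel k xs c"
  unfolding Hsel_def image_image using assms by (intro image_cong) auto

lemma perm_map_bij:
  assumes "bij_betw \<tau> A A" "finite A"
  shows "map_pmf (map \<tau>) (pmf_of_set (permutations_of_set A)) = pmf_of_set (permutations_of_set A)"
proof -
  have inj: "inj_on \<tau> A" using assms bij_betw_def by blast
  have sub: "map \<tau> ` permutations_of_set A \<subseteq> permutations_of_set A"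
  proof
    fix ys assume "ys \<in> map \<tau> ` permutations_of_set A"
    then obtain xs where xs: "xs \<in> permutations_of_set A" "ys = map \<tau> xs" by auto
    then have "set xs = A" "distinct xs" by (auto simp: permutations_of_set_def)
    then show "ys \<in> permutations_of_set A" using xs assms inj
      by (auto simp: permutations_of_set_def distinct_map bij_betw_def)
  qed
  have injm: "inj_on (map \<tau>) (permutations_of_set A)"
  proof (rule inj_onI)
    fix xs ys assume "xs \<in> permutations_of_set A" "ys \<in> permutations_of_set A" "map \<tau> xs = map \<tau> ys"
    then show "xs = ys" using inj by (auto simp: permutations_of_set_def inj_on_map_eq_map)
  qed
  have "map \<tau> ` permutations_of_set A = permutations_of_set A"
    using sub injm by (intro card_subset_eq) (auto simp: card_image assms)
  then show ?thesis using injm assms by (subst map_pmf_of_set_inj) auto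
qed

lemma exists_perm:
  assumes "finite A" "H \<subseteq> A" "H' \<subseteq> A" "card H = card H'"
  shows "\<exists>\<tau>. bij_betw \<tau> A A \<and> \<tau> ` H = H'"
proof -
  have fH: "finite H" "finite H'" using assms(1,2,3) finite_subset by auto
  obtain f where f: "bij_betw f H H'" using finite_same_card_bij[OF fH assms(4)] by blast
  have "card (A - H) = card A - card H" using card_Diff_subset[OF fH(1) assms(2)] .
  also have "\<dots> = card (A - H')" using card_Diff_subset[OF fH(2) assms(3)] assms(4) by simp
  finally have "card (A - H) = card (A - H')" .
  moreover have "finite (A - H)" "finite (A - H')" using assms(1) by simp_all
  ultimately obtain g where g: "bij_betw g (A - H) (A - H')" using finite_same_card_bij by metis
  define \<tau> where "\<tau> x = (if x \<in> H then f x else g x)" for x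
  have 1: "bij_betw \<tau> H H'" using f bij_betw_cong[of H \<tau> f H'] by (simp add: \<tau>_def)
  have 2: "bij_betw \<tau> (A - H) (A - H')" using g bij_betw_cong[of "A - H" \<tau> g "A - H'"] by (simp add: \<tau>_def)
  have "bij_betw \<tau> (H \<union> (A - H)) (H' \<union> (A - H'))" by (rule bij_betw_combine[OF 1 2]) blast
  moreover have "H \<union> (A - H) = A" "H' \<union> (A - H') = A" using assms(2,3) by blast+
  ultimately have "bij_betw \<tau> A A" by simp
  moreover have "\<tau> ` H = H'" using 1 by (simp add: bij_betw_def)
  ultimately show ?thesis by blast
qed

lemma uniform_crit:
  assumes "finite S" "S \<noteq> {}" "set_pmf Q \<subseteq> S" "\<And>x y. x \<in> S \<Longrightarrow> y \<in> S \<Longrightarrow> pmf Q x \<le> pmf Q y"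
  shows "Q = pmf_of_set S"
proof (rule pmf_eqI)
  obtain x0 where x0: "x0 \<in> S" using assms(2) by blast
  have c: "pmf Q x = pmf Q x0" if "x \<in> S" for x using assms(4)[OF that x0] assms(4)[OF x0 that] by linarith
  have "1 = (\<Sum>x\<in>S. pmf Q x)" using sum_pmf_eq_1[OF assms(1,3)] by simp
  also have "\<dots> = (\<Sum>x\<in>S. pmf Q x0)" by (rule sum.cong) (simp_all add: c)
  also have "\<dots> = card S * pmf Q x0" by simp
  finally have e0: "1 = real (card S) * pmf Q x0" .
  have cp: "card S > 0" using assms(1,2) card_gt_0_iff by blast
  have e: "pmf Q x0 = 1 / card S" using e0 cp by (simp add: field_simps)
  fix i show "pmf Q i = pmf (pmf_of_set S) i"
  proof (cases "i \<in> S")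
    case True then show ?thesis using c[OF True] e assms(1,2) by simp
  next
    case False then have "i \<notin> set_pmf Q" using assms(3) by blast
    then show ?thesis using False assms(1,2) by (simp add: set_pmf_iff)
  qed
qed

lemma pmf_map_ge: "f x = y \<Longrightarrow> pmf Q x \<le> pmf (map_pmf f Q) y"
proof -
  assume "f x = y"
  then have "{x} \<subseteq> f -` {y}" by auto
  then have "measure Q {x} \<le> measure Q (f -` {y})" by (intro measure_pmf.finite_measure_mono) auto
  then show ?thesis by (simp add: pmf_map measure_pmf_single)
qed

lemma Hsel_uniform:
  assumes "finite A" "card A = 2*k"
  shows "map_pmf (\<lambda>xs. Hsel k xs c) (pmf_of_set (permutations_of_set A)) = pmf_of_set {H. H \<subseteq> A \<and> card H = k}"
    (is "?Q = _")
proof (rule uniform_crit)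
  have ne: "permutations_of_set A \<noteq> {}" "finite (permutations_of_set A)"
    using assms(1) by (simp_all add: permutations_of_set_nonempty finite_permutations_of_set)
  show "finite {H. H \<subseteq> A \<and> card H = k}" by (rule finite_subset[of _ "Pow A"]) (use assms in auto)
  show "set_pmf ?Q \<subseteq> {H. H \<subseteq> A \<and> card H = k}" 
  proof
    fix H assume "H \<in> set_pmf ?Q"
    then obtain xs where "xs \<in> permutations_of_set A" "H = Hsel k xs c" using ne by auto
    then show "H \<in> {H. H \<subseteq> A \<and> card H = k}" using Hsel_props[of xs A k c] assms by simp
  qed
  then show "{H. H \<subseteq> A \<and> card H = k} \<noteq> {}" by (metis set_pmf_not_empty subset_empty)
  fix H H' assume H: "H \<in> {H. H \<subseteq> A \<and> card H = k}" and H': "H' \<in> {H. H \<subseteq> A \<and> card H = k}"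
  obtain \<tau> where t: "bij_betw \<tau> A A" "\<tau> ` H = H'" using exists_perm[of A H H'] H H' assms(1) by force
  have inv: "map_pmf ((`) \<tau>) ?Q = ?Q"
  proof -
    have "map_pmf ((`) \<tau>) ?Q = map_pmf (\<lambda>xs. Hsel k (map \<tau> xs) c) (pmf_of_set (permutations_of_set A))"
      unfolding map_pmf_comp
    proof (rule map_pmf_cong[OF refl])
      fix xs assume "xs \<in> set_pmf (pmf_of_set (permutations_of_set A))"
      then have "xs \<in> permutations_of_set A" using ne by auto
      then have "length xs = 2*k" using assms(2) length_finite_permutations_of_set[of xs A] by simp
      then show "\<tau> ` Hsel k xs c = Hsel k (map \<tau> xs) c" by (simp add: Hsel_map)
    qed
    also have "\<dots> = map_pmf (\<lambda>xs. Hsel k xs c) (map_pmf (map \<tau>) (pmf_of_set (permutations_of_set A)))"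
      by (simp add: map_pmf_comp)
    also have "\<dots> = ?Q" using perm_map_bij[OF t(1) assms(1)] by simp
    finally show ?thesis .
  qed
  have "pmf ?Q H \<le> pmf (map_pmf ((`) \<tau>) ?Q) H'" by (rule pmf_map_ge) (use t in auto)
  then show "pmf ?Q H \<le> pmf ?Q H'" using inv by simp
qed

lemma sum_pairs: "(\<Sum>i<2*k. g i) = (\<Sum>j<k. g (2*j) + g (2*j+1::nat)) " for g :: "nat \<Rightarrow> real"
  by (induction k) (simp_all add: sum.lessThan_Suc)

lemma coin_hoeffding:
  fixes a :: "nat \<Rightarrow> real"
  assumes xs: "xs \<in> permutations_of_set A" and fin: "finite A" and cA: "card A = 2*k" and k: "k > 0"
    and ab: "\<forall>x\<in>A. a x \<in> {L..U}" and LU: "L < U" and s: "s \<ge> 0"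
  shows "measure_pmf.prob (Pi_pmf {..<k} False (\<lambda>_. bernoulli_pmf (1/2)))
           {c. \<bar>(\<Sum>x\<in>Hsel k xs c. a x) - (\<Sum>x\<in>A. a x)/2\<bar> \<ge> s} \<le> 2 * exp (- 2 * s\<^sup>2 / (real k * (U - L)\<^sup>2))"
proof -
  define M where "M = Pi_pmf {..<k} False (\<lambda>_. bernoulli_pmf (1/2))"
  have d: "distinct xs" and sx: "set xs = A" using xs by (auto simp: permutations_of_set_def)
  have len: "length xs = 2*k" using length_finite_permutations_of_set[OF xs] cA by simp
  define g where "g i = a (xs ! i)" for i
  have gb: "g i \<in> {L..U}" if "i < 2*k" for i
  proof -
    have "xs ! i \<in> A" using nth_mem[of i xs] len sx that by simp
    then show ?thesis unfolding g_def using ab by simp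
  qed
  define Y where "Y j b = g (2*j + (if b then 1 else 0)) - (g (2*j) + g (2*j+1))/2" for j b
  define X where "X j c = Y j (c j)" for j and c :: "nat \<Rightarrow> bool"
  have ib: "2*j + (if b then 1 else 0) < 2*k" if "j < k" for j and b :: bool using that by auto
  have sumH: "(\<Sum>x\<in>Hsel k xs c. a x) = (\<Sum>j<k. g (2*j + (if c j then 1 else 0)))" for c
  proof -
    have "inj_on (\<lambda>j. xs ! (2*j + (if c j then 1 else 0))) {..<k}"
    proof (rule inj_onI)
      fix i j assume i: "i \<in> {..<k}" and j: "j \<in> {..<k}" and eq: "xs ! (2*i + (if c i then 1 else 0)) = xs ! (2*j + (if c j then 1 else 0))"
      have "2*i + (if c i then 1 else 0) = 2*j + (if c j then 1 else 0)"
        using nth_eq_iff_index_eq[OF d, of "2*i + (if c i then 1 else 0)" "2*j + (if c j then 1 else 0)"] eq ib[of i "c i"] ib[of j "c j"] i j len by auto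
      then show "i = j" by (auto split: if_splits)
    qed
    then show ?thesis unfolding Hsel_def g_def by (simp add: sum.reindex)
  qed
  have sumA: "(\<Sum>x\<in>A. a x) = (\<Sum>i<2*k. g i)"
  proof -
    have inj: "inj_on (\<lambda>i. xs ! i) {..<2*k}" using d len by (simp add: inj_on_def nth_eq_iff_index_eq)
    have "(\<lambda>i. xs ! i) ` {..<2*k} = A" using sx len by (auto simp: set_conv_nth)
    then have "(\<Sum>x\<in>A. a x) = (\<Sum>x\<in>(\<lambda>i. xs ! i) ` {..<2*k}. a x)" by simp
    also have "\<dots> = (\<Sum>i<2*k. g i)" using inj by (simp add: sum.reindex g_def)
    finally show ?thesis .
  qed
  have diff: "(\<Sum>x\<in>Hsel k xs c. a x) - (\<Sum>x\<in>A. a x)/2 = (\<Sum>j\<in>{..<k}. X j c)" for c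
    unfolding sumH sumA sum_pairs X_def Y_def by (simp add: sum_subtractf sum_divide_distrib)
  have Yb: "Y j b \<in> {-(U-L)/2..(U-L)/2}" if "j < k" for j b
    using gb[of "2*j"] gb[of "2*j+1"] that unfolding Y_def by (cases b) (simp_all add: field_simps)
  interpret H: Hoeffding_ineq "measure_pmf M" "{..<k}" X "\<lambda>_. -(U-L)/2" "\<lambda>_. (U-L)/2"
    "\<Sum>j\<in>{..<k}. measure_pmf.expectation M (X j)"
  proof unfold_locales
    show "prob_space.indep_vars (measure_pmf M) (\<lambda>_. borel) X {..<k}"
      unfolding M_def X_def
      by (intro prob_space.indep_vars_compose2[OF _ indep_vars_Pi_pmf])
         (auto simp: measure_pmf.prob_space_axioms)
  next
    fix i assume "i \<in> {..<k}"
    then have "\<And>x. X i x \<in> {- (U - L) / 2..(U - L) / 2}" unfolding X_def using Yb by simp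
    then show "AE x in measure_pmf M. X i x \<in> {- (U - L) / 2..(U - L) / 2}" by simp
  qed simp_all
  have E0: "measure_pmf.expectation M (X j) = 0" if "j < k" for j
  proof -
    have "measure_pmf.expectation M (X j) = measure_pmf.expectation (map_pmf (\<lambda>c. c j) M) (Y j)"
    proof -
      have "X j = (\<lambda>c. Y j (c j))" by (rule ext) (simp add: X_def)
      then show ?thesis by simp
    qed
    also have "map_pmf (\<lambda>c. c j) M = bernoulli_pmf (1/2)" unfolding M_def using that by (simp add: Pi_pmf_component)
    finally show ?thesis by (simp add: Y_def field_simps)
  qed
  have "measure_pmf.prob M {x \<in> space (measure_pmf M). \<bar>(\<Sum>j\<in>{..<k}. X j x) - (\<Sum>j\<in>{..<k}. measure_pmf.expectation M (X j))\<bar> \<ge> s}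
        \<le> 2 * exp (-2 * s\<^sup>2 / (\<Sum>j\<in>{..<k}. ((U-L)/2 - (-(U-L)/2))\<^sup>2))"
    using LU k by (intro H.Hoeffding_ineq_abs_ge s) (simp add: power2_eq_square)
  moreover have "(\<Sum>j\<in>{..<k}. measure_pmf.expectation M (X j)) = 0" using E0 by simp
  moreover have "(U - L) / 2 - (L - U) / 2 = U - L" by (simp add: field_simps)
  ultimately have "measure_pmf.prob M {c. s \<le> \<bar>\<Sum>j<k. X j c\<bar>} \<le> 2 * exp (- (2 * s\<^sup>2 / (real k * (U - L)\<^sup>2)))"
    by simp
  then show ?thesis unfolding M_def[symmetric] using diff by simp
qed


lemma prob_bind_le:
  assumes "\<And>x. x \<in> set_pmf P \<Longrightarrow> measure_pmf.prob (f x) E \<le> c" "c \<ge> 0"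
  shows "measure_pmf.prob (bind_pmf P f) E \<le> c"
proof -
  have "emeasure (measure_pmf (bind_pmf P f)) E = (\<integral>\<^sup>+x. emeasure (measure_pmf (f x)) E \<partial>measure_pmf P)" by simp
  also have "\<dots> \<le> (\<integral>\<^sup>+x. ennreal c \<partial>measure_pmf P)"
    by (intro nn_integral_mono_AE) (auto simp: AE_measure_pmf_iff measure_pmf.emeasure_eq_measure intro!: ennreal_leI assms(1))
  also have "\<dots> = ennreal c" by simp
  finally show ?thesis using assms(2) by (simp add: measure_pmf.emeasure_eq_measure)
qed

lemma half_conc:
  fixes a :: "nat \<Rightarrow> real"
  assumes fin: "finite A" and cA: "card A = 2*k" and k: "k > 0"
    and ab: "\<forall>x\<in>A. a x \<in> {L..U}" and LU: "L < U" and s: "s \<ge> 0"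
  shows "measure_pmf.prob (pmf_of_set {H. H \<subseteq> A \<and> card H = k})
           {H. \<bar>(\<Sum>x\<in>H. a x) - (\<Sum>x\<in>A. a x)/2\<bar> \<ge> s} \<le> 2 * exp (- 2 * s\<^sup>2 / (real k * (U - L)\<^sup>2))"
proof -
  define P where "P = pmf_of_set (permutations_of_set A)"
  define M where "M = Pi_pmf {..<k} False (\<lambda>_. bernoulli_pmf (1/2))"
  have ne: "permutations_of_set A \<noteq> {}" "finite (permutations_of_set A)"
    using fin by (simp_all add: permutations_of_set_nonempty finite_permutations_of_set)
  have "bind_pmf P (\<lambda>xs. map_pmf (\<lambda>c. Hsel k xs c) M)
      = bind_pmf P (\<lambda>xs. bind_pmf M (\<lambda>c. return_pmf (Hsel k xs c)))" by (simp add: map_pmf_def)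
  also have "\<dots> = bind_pmf M (\<lambda>c. bind_pmf P (\<lambda>xs. return_pmf (Hsel k xs c)))" by (rule bind_commute_pmf)
  also have "\<dots> = bind_pmf M (\<lambda>c. map_pmf (\<lambda>xs. Hsel k xs c) P)" by (simp add: map_pmf_def)
  also have "\<dots> = bind_pmf M (\<lambda>c. pmf_of_set {H. H \<subseteq> A \<and> card H = k})"
    unfolding P_def using Hsel_uniform[OF fin cA] by simp
  also have "\<dots> = pmf_of_set {H. H \<subseteq> A \<and> card H = k}" by simp
  finally have eq: "pmf_of_set {H. H \<subseteq> A \<and> card H = k} = bind_pmf P (\<lambda>xs. map_pmf (\<lambda>c. Hsel k xs c) M)" by simp
  show ?thesis unfolding eq
  proof (rule prob_bind_le)
    fix xs assume "xs \<in> set_pmf P"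
    then have xs: "xs \<in> permutations_of_set A" using ne unfolding P_def by simp
    show "measure_pmf.prob (map_pmf (\<lambda>c. Hsel k xs c) M) {H. \<bar>(\<Sum>x\<in>H. a x) - (\<Sum>x\<in>A. a x)/2\<bar> \<ge> s}
          \<le> 2 * exp (- 2 * s\<^sup>2 / (real k * (U - L)\<^sup>2))"
      using coin_hoeffding[OF xs fin cA k ab LU s] unfolding M_def by simp
  qed simp
qed

lemma pmf_rand_out:
  assumes "finite S" "S \<noteq> {}"
  shows "pmf (rand_out S R) y = (\<Sum>x\<in>S. pmf (R x) y) / card S"
  unfolding rand_out_def by (rule pmf_bind_pmf_of_set[OF assms(2,1)])

lemma prob_rand_out:
  assumes "finite S" "S \<noteq> {}"
  shows "measure_pmf.prob (rand_out S R) Y = (\<Sum>x\<in>S. measure_pmf.prob (R x) Y) / card S"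
proof -
  have cp: "card S > 0" using assms card_gt_0_iff by blast
  have "emeasure (measure_pmf (rand_out S R)) Y = (\<integral>\<^sup>+x. emeasure (measure_pmf (R x)) Y \<partial>measure_pmf (pmf_of_set S))"
    unfolding rand_out_def by simp
  also have "\<dots> = (\<Sum>x\<in>S. emeasure (measure_pmf (R x)) Y) / card S"
    using assms by (simp add: nn_integral_pmf_of_set)
  also have "\<dots> = (\<Sum>x\<in>S. ennreal (measure_pmf.prob (R x) Y)) / ennreal (card S)"
    by (simp add: measure_pmf.emeasure_eq_measure ennreal_of_nat_eq_real_of_nat)
  also have "\<dots> = ennreal ((\<Sum>x\<in>S. measure_pmf.prob (R x) Y) / card S)"
    using cp by (subst sum_ennreal) (auto intro!: divide_ennreal sum_nonneg)
  finally show ?thesis by (simp add: measure_pmf.emeasure_eq_measure divide_nonneg_nonneg sum_nonneg)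
qed

lemma private_single:
  assumes "private_randomizer eps d R" "x \<in> {1..d}" "x' \<in> {1..d}"
  shows "pmf (R x) y \<le> exp eps * pmf (R x') y"
  using assms unfolding private_randomizer_def by (metis measure_pmf_single)

lemma rand_out_H_le:
  assumes priv: "private_randomizer eps d R" and S: "S \<subseteq> {1..d}" "S \<noteq> {}"
  shows "measure_pmf.prob (rand_out S R) Y \<le> exp eps * measure_pmf.prob (rand_out {1..d} R) Y"
proof -
  have fS: "finite S" using S finite_subset by blast
  have dne: "{1..d} \<noteq> {}" using S by auto
  have cS: "card S > 0" "card {1..d} > 0" using fS S dne by (simp_all add: card_gt_0_iff)
  have pt: "(\<Sum>x\<in>S. measure_pmf.prob (R x) Y) / card S \<le> exp eps * measure_pmf.prob (R x') Y"
    if x': "x' \<in> {1..d}" for x'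
  proof -
    have "(\<Sum>x\<in>S. measure_pmf.prob (R x) Y) \<le> (\<Sum>x\<in>S. exp eps * measure_pmf.prob (R x') Y)"
      using priv S x' unfolding private_randomizer_def by (intro sum_mono) auto
    also have "\<dots> = card S * (exp eps * measure_pmf.prob (R x') Y)" by simp
    finally show ?thesis using cS by (simp add: field_simps)
  qed
  have "(\<Sum>x'\<in>{1..d}. (\<Sum>x\<in>S. measure_pmf.prob (R x) Y) / card S) \<le> (\<Sum>x'\<in>{1..d}. exp eps * measure_pmf.prob (R x') Y)"
    by (intro sum_mono pt) 
  then have "card {1..d} * ((\<Sum>x\<in>S. measure_pmf.prob (R x) Y) / card S) \<le> exp eps * (\<Sum>x'\<in>{1..d}. measure_pmf.prob (R x') Y)"
    by (simp add: sum_distrib_left)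
  then have ineq: "(\<Sum>x\<in>S. measure_pmf.prob (R x) Y) / card S \<le> exp eps * ((\<Sum>x'\<in>{1..d}. measure_pmf.prob (R x') Y) / card {1..d})"
    using cS by (simp add: field_simps)
  have "measure_pmf.prob (rand_out S R) Y = (\<Sum>x\<in>S. measure_pmf.prob (R x) Y) / card S" by (rule prob_rand_out[OF fS S(2)])
  moreover have "measure_pmf.prob (rand_out {1..d} R) Y = (\<Sum>x'\<in>{1..d}. measure_pmf.prob (R x') Y) / card {1..d}"
    by (rule prob_rand_out) (use dne in auto)
  ultimately show ?thesis using ineq by (simp only:)
qed

lemma ln_close:
  fixes r v :: real
  assumes "\<bar>r - 1\<bar> < v/2" "v \<le> 1"
  shows "r > 0" "\<bar>ln r\<bar> \<le> v"
proof -
  have r2: "r > 1/2" using assms by linarith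
  then show "r > 0" by simp
  have v0: "v \<ge> 0" using assms by linarith
  have "ln r \<le> r - 1" using ln_le_minus_one r2 by simp
  then have u: "ln r \<le> v" using assms by linarith
  have "ln (1/r) \<le> 1/r - 1" using ln_le_minus_one r2 by simp
  moreover have "ln (1/r) = - ln r" using r2 by (simp add: ln_div)
  moreover have "1/r - 1 \<le> v"
  proof -
    have "v * (1/2) \<le> v * r" using mult_left_mono[of "1/2" r v] r2 v0 by simp
    then have "1 - r \<le> v * r" using assms by linarith
    then show ?thesis using r2 by (simp add: field_simps)
  qed
  ultimately have "- ln r \<le> v" by simp
  then show "\<bar>ln r\<bar> \<le> v" using u by simp
qed

lemma arith_w:
  fixes v w :: real
  assumes "k > (0::nat)"
  shows "- 2 * (real k * v / 2)\<^sup>2 / (real k * w) = - (real (2*k) * v\<^sup>2) / (4 * w)"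
  using assms by (cases "w = 0") (simp_all add: power2_eq_square field_simps)

lemma leak_y:
  assumes priv: "private_randomizer eps d R" and eps: "eps > 0" and de: "even d" and dp: "d > 0"
    and v: "0 \<le> v" "v \<le> 1"
    and bnd: "2 * exp (- (real d * v\<^sup>2) / (4 * (exp eps - exp (-eps))\<^sup>2)) \<le> beta"
  shows "measure_pmf.prob (pmf_of_set {H. H \<subseteq> {1..d} \<and> card H = d div 2}) {H. y \<in> Leak v d H R} \<le> beta"
proof -
  define k where "k = d div 2"
  have k: "k > 0" "d = 2*k" using de dp by (auto simp: k_def)
  define A where "A = {1..d}"
  have fA: "finite A" "A \<noteq> {}" "card A = 2*k" using dp k by (auto simp: A_def)
  define HH where "HH = {H. H \<subseteq> A \<and> card H = k}"
  have fHH: "finite HH" unfolding HH_def by (rule finite_subset[of _ "Pow A"]) (use fA in auto)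
  have b0: "beta \<ge> 0" using bnd by (smt (verit) exp_ge_zero)
  define p where "p x = pmf (R x) y" for x
  define P where "P = pmf (rand_out A R) y"
  show ?thesis
  proof (cases "P = 0")
    case True
    then have "{H. y \<in> Leak v d H R} = {}" by (simp add: Leak_def P_def A_def)
    then show ?thesis using b0 by simp
  next
    case False
    then have Pp: "P > 0" unfolding P_def using pmf_nonneg by (metis less_eq_real_def)
    have PA: "P = (\<Sum>x\<in>A. p x) / d" unfolding P_def p_def using pmf_rand_out[OF fA(1,2)] fA k by simp
    have up: "p x \<le> exp eps * P" if x: "x \<in> A" for x
    proof -
      have "(\<Sum>x'\<in>A. p x) \<le> (\<Sum>x'\<in>A. exp eps * p x')"
        by (intro sum_mono) (use priv x in \<open>auto simp: p_def A_def intro: private_single\<close>)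
      then have "d * p x \<le> exp eps * (\<Sum>x'\<in>A. p x')" using fA k by (simp add: sum_distrib_left)
      also have "(\<Sum>x'\<in>A. p x') = real d * P" using PA dp by simp
      finally have "real d * p x \<le> real d * (exp eps * P)" by (simp add: ac_simps)
      then show ?thesis using dp by (simp add: mult_le_cancel_left_pos)
    qed
    have lo: "P \<le> exp eps * p x" if x: "x \<in> A" for x
    proof -
      have "(\<Sum>x'\<in>A. p x') \<le> (\<Sum>x'\<in>A. exp eps * p x)"
        by (intro sum_mono) (use priv x in \<open>auto simp: p_def A_def intro: private_single\<close>)
      then have "(\<Sum>x'\<in>A. p x') \<le> d * (exp eps * p x)" using fA k by simp
      also have "(\<Sum>x'\<in>A. p x') = real d * P" using PA dp by simp
      finally have "real d * P \<le> real d * (exp eps * p x)" .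
      then show ?thesis using dp by (simp add: mult_le_cancel_left_pos)
    qed
    define a where "a x = p x / P" for x
    have ab: "\<forall>x\<in>A. a x \<in> {exp (-eps)..exp eps}"
    proof
      fix x assume x: "x \<in> A"
      have "a x \<le> exp eps" using up[OF x] Pp by (simp add: a_def field_simps)
      moreover have "exp (-eps) \<le> a x" using lo[OF x] Pp by (simp add: a_def exp_minus field_simps)
      ultimately show "a x \<in> {exp (-eps)..exp eps}" by simp
    qed
    have sA: "(\<Sum>x\<in>A. a x) = d" using PA Pp dp by (simp add: a_def sum_divide_distrib[symmetric] field_simps)
    have incl: "HH \<inter> {H. y \<in> Leak v d H R} \<subseteq> HH \<inter> {H. \<bar>(\<Sum>x\<in>H. a x) - (\<Sum>x\<in>A. a x)/2\<bar> \<ge> k * v / 2}"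
    proof (rule subsetI, rule ccontr)
      fix H assume H: "H \<in> HH \<inter> {H. y \<in> Leak v d H R}"
        and n: "H \<notin> HH \<inter> {H. \<bar>(\<Sum>x\<in>H. a x) - (\<Sum>x\<in>A. a x)/2\<bar> \<ge> k * v / 2}"
      have HH: "H \<subseteq> A" "card H = k" using H by (auto simp: HH_def)
      have fH: "finite H" "H \<noteq> {}" using HH fA k finite_subset by auto
      have lt: "\<bar>(\<Sum>x\<in>H. a x) - k\<bar> < k * v / 2" using n H sA k by auto
      define r where "r = (\<Sum>x\<in>H. a x) / k"
      have "\<bar>r - 1\<bar> = \<bar>(\<Sum>x\<in>H. a x) - k\<bar> / k" using k by (simp add: r_def field_simps)
      also have "\<dots> < v / 2" using lt k by (simp add: field_simps)
      finally have rc: "\<bar>r - 1\<bar> < v / 2" .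
      have pH: "pmf (rand_out H R) y = (\<Sum>x\<in>H. p x) / k" unfolding p_def using pmf_rand_out[OF fH] HH by simp
      have rq: "pmf (rand_out H R) y / P = r"
        unfolding pH r_def a_def using Pp by (simp add: sum_divide_distrib[symmetric] field_simps)
      have "r > 0" "\<bar>ln r\<bar> \<le> v" using ln_close[OF rc v(2)] by auto
      then have "pmf (rand_out H R) y \<noteq> 0" using rq by auto
      then have "y \<notin> Leak v d H R" using rq \<open>\<bar>ln r\<bar> \<le> v\<close> unfolding Leak_def P_def A_def by auto
      then show False using H by simp
    qed
    have eqHH: "{H. H \<subseteq> {1..d} \<and> card H = d div 2} = HH" by (simp add: HH_def A_def k_def)
    have "measure_pmf.prob (pmf_of_set HH) {H. y \<in> Leak v d H R}
       \<le> measure_pmf.prob (pmf_of_set HH) {H. \<bar>(\<Sum>x\<in>H. a x) - (\<Sum>x\<in>A. a x)/2\<bar> \<ge> k * v / 2}"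
    proof -
      have "{1..k} \<in> HH" using k by (auto simp: HH_def A_def)
      then have ne: "HH \<noteq> {}" by blast
      show ?thesis using fHH ne incl
        by (simp add: measure_pmf_of_set divide_right_mono card_mono)
    qed
    also have "\<dots> \<le> 2 * exp (- 2 * (k * v / 2)\<^sup>2 / (real k * (exp eps - exp (-eps))\<^sup>2))"
      unfolding HH_def
      by (rule half_conc[OF fA(1) fA(3) k(1) ab]) (use eps v in auto)
    also have "- 2 * (k * v / 2)\<^sup>2 / (real k * (exp eps - exp (-eps))\<^sup>2) = - (real d * v\<^sup>2) / (4 * (exp eps - exp (-eps))\<^sup>2)"
      using arith_w[OF k(1), of v "(exp eps - exp (-eps))\<^sup>2"] k(2) by simp
    finally show ?thesis using bnd eqHH by simp
  qed
qed

lemma exp_swap: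
  fixes Q :: "'a pmf" and U :: "'b pmf" and S :: "'a \<Rightarrow> 'b set"
  assumes b: "\<And>y. measure_pmf.prob Q {x. y \<in> S x} \<le> b" and b0: "b \<ge> 0"
  shows "measure_pmf.expectation Q (\<lambda>x. measure_pmf.prob U (S x)) \<le> b"
proof -
  have int: "integrable (measure_pmf Q) (\<lambda>x. measure_pmf.prob U (S x))"
    by (rule measure_pmf.integrable_const_bound[where B=1]) auto
  have "ennreal (measure_pmf.expectation Q (\<lambda>x. measure_pmf.prob U (S x)))
      = (\<integral>\<^sup>+x. ennreal (measure_pmf.prob U (S x)) \<partial>measure_pmf Q)"
    by (rule nn_integral_eq_integral[symmetric]) (use int in auto)
  also have "\<dots> = (\<integral>\<^sup>+x. \<integral>\<^sup>+y. indicator {(x,y). y \<in> S x} (x,y) \<partial>measure_pmf U \<partial>measure_pmf Q)"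
    by (intro nn_integral_cong) (simp add: measure_pmf.emeasure_eq_measure[symmetric] indicator_def split_beta' flip: nn_integral_indicator)
  also have "\<dots> = (\<integral>\<^sup>+z. indicator {(x,y). y \<in> S x} z \<partial>measure_pmf (pair_pmf Q U))"
    by (rule nn_integral_pair_pmf'[symmetric])
  also have "\<dots> = (\<integral>\<^sup>+z. indicator {(x,y). y \<in> S x} z \<partial>measure_pmf (map_pmf (\<lambda>(x, y). (y, x)) (pair_pmf U Q)))"
    by (subst pair_commute_pmf) rule
  also have "\<dots> = (\<integral>\<^sup>+z. indicator {(x,y). y \<in> S x} ((\<lambda>(x, y). (y, x)) z) \<partial>measure_pmf (pair_pmf U Q))"
    by simp
  also have "\<dots> = (\<integral>\<^sup>+y. \<integral>\<^sup>+x. indicator {x. y \<in> S x} x \<partial>measure_pmf Q \<partial>measure_pmf U)"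
    by (subst nn_integral_pair_pmf') (intro nn_integral_cong, simp add: indicator_def)
  also have "\<dots> = (\<integral>\<^sup>+y. ennreal (measure_pmf.prob Q {x. y \<in> S x}) \<partial>measure_pmf U)"
    by (simp add: measure_pmf.emeasure_eq_measure)
  also have "\<dots> \<le> (\<integral>\<^sup>+y. ennreal b \<partial>measure_pmf U)"
    by (intro nn_integral_mono ennreal_leI b)
  also have "\<dots> = ennreal b" by simp
  finally show ?thesis using b0 by simp
qed

lemma exp_diff_le:
  assumes "eps > (0::real)"
  shows "0 < exp eps - exp (-eps)" "exp eps - exp (-eps) \<le> exp (2*eps) - 1"
proof -
  define t where "t = exp eps"
  have t: "t > 1" using assms by (simp add: t_def)
  have tp: "t > 0" using t by simp
  have "exp (2*eps) = exp (eps + eps)" by simp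
  also have "\<dots> = t*t" by (simp only: exp_add t_def)
  finally have e2: "exp (2*eps) = t*t" .
  have em: "exp (-eps) = 1/t" by (simp only: exp_minus t_def inverse_eq_divide)
  have it: "1/t < 1" using t by simp
  show "0 < exp eps - exp (-eps)" unfolding em t_def[symmetric] using it t by linarith
  have "1*1 \<le> t*t" using t by (intro mult_mono) auto
  then have a0: "t*t - 1 \<ge> 0" by simp
  have "(t*t - 1)*1 \<le> (t*t - 1)*t" using mult_left_mono[of 1 t "t*t-1"] a0 t by simp
  then have "(t*t - 1)/t \<le> t*t - 1" using tp by (simp add: pos_divide_le_eq)
  moreover have "t - 1/t = (t*t - 1)/t" using tp by (simp add: field_simps)
  ultimately have "t - 1/t \<le> t*t - 1" by simp
  then show "exp eps - exp (-eps) \<le> exp (2*eps) - 1" unfolding em e2 t_def[symmetric] .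
qed

theorem mainTheorem8:
  fixes eps beta :: real and d n :: nat and R :: "nat \<Rightarrow> nat \<Rightarrow> 'y::countable pmf"
  assumes "eps > 0" and "0 < beta" and "beta < 1"
    and "even d" and "real d > 4 * (exp (2 * eps) - 1)^2 * ln (2 / beta)"
    and "\<forall>i\<in>{1..n}. private_randomizer eps d (R i)"
  defines "v \<equiv> (exp (2 * eps) - 1) * sqrt (4 / real d * ln (2 / beta))"
  shows "measure_pmf.prob (pmf_of_set {H. H \<subseteq> {1..d} \<and> card H = d div 2})
           {H. (\<forall>i\<in>{1..n}. measure_pmf.prob (rand_out {1..d} (R i)) (Leak v d H (R i))
                               < 6 * beta * real n)
             \<and> (\<forall>i\<in>{1..n}. measure_pmf.prob (rand_out H (R i)) (Leak v d H (R i))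
                               < 6 * exp eps * beta * real n)} \<ge> 5 / 6"
proof -
  note eps = assms(1) and bp = assms(2) and b1 = assms(3) and de = assms(4) and dbig = assms(5)
    and priv = assms(6)
  define w where "w = exp (2 * eps) - 1"
  define L where "L = ln (2 / beta)"
  have w: "w > 0" using eps by (simp add: w_def)
  have Lp: "L > 0" using bp b1 by (simp add: L_def)
  have dbig': "real d > 4 * w^2 * L" using dbig by (simp add: w_def L_def)
  have dp: "d > 0"
  proof -
    have "4*w^2*L > 0" using w Lp by simp
    then have "real d > 0" using dbig' by linarith
    then show ?thesis by simp
  qed
  have vdef: "v = w * sqrt (4 / real d * L)" by (simp add: v_def w_def L_def)
  have v0: "v \<ge> 0" using w Lp dp by (simp add: vdef)
  have v2: "v\<^sup>2 = w^2 * (4 / real d * L)" using Lp dp by (simp add: vdef power_mult_distrib)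
  have dv2: "real d * v\<^sup>2 = 4 * w^2 * L" using dp by (simp add: v2 field_simps)
  have v1: "v \<le> 1"
  proof -
    have "real d * v\<^sup>2 < real d * 1" using dv2 dbig' by simp
    then have "v\<^sup>2 < 1\<^sup>2" using dp by (simp add: mult_less_cancel_left_pos)
    then have "v < 1" by (rule power_less_imp_less_base) simp
    then show ?thesis by simp
  qed
  define u where "u = exp eps - exp (-eps)"
  have u: "0 < u" "u \<le> w" using exp_diff_le[OF eps] by (simp_all add: u_def w_def)
  have bnd: "2 * exp (- (real d * v\<^sup>2) / (4 * (exp eps - exp (-eps))\<^sup>2)) \<le> beta"
  proof -
    have u2: "u^2 \<le> w^2" by (rule power_mono) (use u in auto)
    have u2p: "u^2 > 0" using u by simp
    have "L * u^2 \<le> L * w^2" using u2 Lp by (simp add: mult_left_mono)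
    then have Lle: "L \<le> w^2 * L / u^2" using u2p by (simp add: pos_le_divide_eq mult.commute)
    have "(real d * v\<^sup>2) / (4 * u\<^sup>2) = w^2 * L / u^2" using dv2 by simp
    then have "- (real d * v\<^sup>2) / (4 * u\<^sup>2) \<le> - L" using Lle by (simp only: minus_divide_left)
    then have "exp (- (real d * v\<^sup>2) / (4 * u\<^sup>2)) \<le> exp (- L)" by (simp only: exp_le_cancel_iff)
    also have "exp (- L) = beta / 2"
    proof -
      have "exp (- L) = inverse (exp (ln (2 / beta)))" by (simp add: L_def exp_minus)
      also have "exp (ln (2 / beta)) = 2 / beta" using bp by simp
      finally show ?thesis by simp
    qed
    finally have "exp (- (real d * v\<^sup>2) / (4 * u\<^sup>2)) \<le> beta / 2" .
    then show ?thesis unfolding u_def[symmetric] by linarith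
  qed
  define HH where "HH = {H. H \<subseteq> {1..d} \<and> card H = d div 2}"
  define Q where "Q = pmf_of_set HH"
  have fHH: "finite HH" unfolding HH_def by (rule finite_subset[of _ "Pow {1..d}"]) auto
  have neHH: "HH \<noteq> {}"
  proof -
    have "{1..d div 2} \<in> HH" by (auto simp: HH_def)
    then show ?thesis by blast
  qed
  define f where "f i H = measure_pmf.prob (rand_out {1..d} (R i)) (Leak v d H (R i))" for i H
  have Ef: "measure_pmf.expectation Q (f i) \<le> beta" if i: "i \<in> {1..n}" for i
  proof -
    have "measure_pmf.prob Q {H. y \<in> Leak v d H (R i)} \<le> beta" for y
    proof -
      have "private_randomizer eps d (R i)" using priv i by blast
      from leak_y[OF this eps de dp v0 v1 bnd, of y] show ?thesis unfolding Q_def HH_def .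
    qed
    then show ?thesis unfolding f_def by (rule exp_swap) (use bp in simp)
  qed
  define GS where "GS = {H. (\<forall>i\<in>{1..n}. measure_pmf.prob (rand_out {1..d} (R i)) (Leak v d H (R i))
                               < 6 * beta * real n)
             \<and> (\<forall>i\<in>{1..n}. measure_pmf.prob (rand_out H (R i)) (Leak v d H (R i))
                               < 6 * exp eps * beta * real n)}"
  show ?thesis
  proof (cases "n = 0")
    case True
    then have "GS = UNIV" by (simp add: GS_def)
    then show ?thesis unfolding GS_def[symmetric] by simp
  next
    case False
    define c where "c = 6 * beta * real n"
    have cp: "c > 0" using False bp by (simp add: c_def)
    define B where "B i = {H. c \<le> f i H}" for i
    have PB: "measure_pmf.prob Q (B i) \<le> 1 / (6 * real n)" if i: "i \<in> {1..n}" for i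
    proof -
      have "measure_pmf.prob Q (B i) \<le> measure_pmf.expectation Q (f i) / c"
      proof -
        have int: "integrable (measure_pmf Q) (f i)"
          by (rule measure_pmf.integrable_const_bound[where B=1]) (auto simp: f_def)
        have nn: "AE x in measure_pmf Q. 0 \<le> f i x" by (simp add: f_def)
        show ?thesis unfolding B_def using integral_Markov_inequality_measure[OF int _ nn cp] by simp
      qed
      also have "\<dots> \<le> beta / c" using Ef[OF i] cp by (simp add: divide_right_mono)
      also have "\<dots> = 1 / (6 * real n)" using bp by (simp add: c_def)
      finally show ?thesis .
    qed
    have "measure_pmf.prob Q (\<Union>i\<in>{1..n}. B i) \<le> (\<Sum>i\<in>{1..n}. measure_pmf.prob Q (B i))"
      by (rule measure_pmf.finite_measure_subadditive_finite) auto
    also have "\<dots> \<le> (\<Sum>i\<in>{1..n}. 1 / (6 * real n))" by (rule sum_mono) (rule PB)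
    also have "\<dots> = 1/6" using False by simp
    finally have PU: "measure_pmf.prob Q (\<Union>i\<in>{1..n}. B i) \<le> 1/6" .
    have sub: "HH - (\<Union>i\<in>{1..n}. B i) \<subseteq> GS"
    proof
      fix H assume H: "H \<in> HH - (\<Union>i\<in>{1..n}. B i)"
      have Hs: "H \<subseteq> {1..d}" "H \<noteq> {}" using H dp de by (auto simp: HH_def)
      have lt: "f i H < c" if "i \<in> {1..n}" for i
      proof -
        have "H \<notin> B i" using H that by blast
        then show ?thesis by (simp add: B_def not_le)
      qed
      have "measure_pmf.prob (rand_out H (R i)) (Leak v d H (R i)) < 6 * exp eps * beta * real n"
        if i: "i \<in> {1..n}" for i
      proof -
        have "measure_pmf.prob (rand_out H (R i)) (Leak v d H (R i)) \<le> exp eps * f i H"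
          unfolding f_def using rand_out_H_le[OF _ Hs] priv i by blast
        also have "\<dots> < exp eps * c" using lt[OF i] by simp
        finally show ?thesis by (simp add: c_def)
      qed
      then show "H \<in> GS" using lt by (auto simp: GS_def f_def c_def)
    qed
    have "1 = measure_pmf.prob Q HH" using fHH neHH by (simp add: Q_def measure_pmf_of_set)
    also have "\<dots> \<le> measure_pmf.prob Q ((HH - (\<Union>i\<in>{1..n}. B i)) \<union> (\<Union>i\<in>{1..n}. B i))"
      by (intro measure_pmf.finite_measure_mono) auto
    also have "\<dots> \<le> measure_pmf.prob Q (HH - (\<Union>i\<in>{1..n}. B i)) + measure_pmf.prob Q (\<Union>i\<in>{1..n}. B i)"
      by (rule measure_Un_le) auto
    also have "\<dots> \<le> measure_pmf.prob Q GS + 1/6"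
      using PU sub by (intro add_mono measure_pmf.finite_measure_mono) auto
    finally have "measure_pmf.prob Q GS \<ge> 5/6" by simp
    then show ?thesis unfolding GS_def Q_def HH_def .
  qed
qed

end
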